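(* Let $X_0,X_1,\dots,X_q$ be sets with $X_q=A$, let $\mathcal H_i$ be a family of maps $X_{i-1}\to X_i$ ($1\le i\le q$), let $l\colon Y\times A\to[0,M]$, and set $\mathcal H=\mathcal H_q\circ\dots\circ\mathcal H_1$ and $\mathcal G_i=\mathcal H_q\circ\dots\circ\mathcal H_{i+1}$ for $1\le i\le q-1$. For all $\varepsilon_1,\dots,\varepsilon_q>0$, with $\varepsilon=\sum_{i=1}^q\varepsilon_i$, $$\mathcal C(\varepsilon,l_{\mathcal H})\le\mathcal C(\varepsilon_q,l_{\mathcal H_q})\prod_{i=1}^{q-1}\mathcal C_{l_{\mathcal G_i}}(\varepsilon_i,\mathcal H_i).$$
   Context: For a map $h\colon W\to A$, $l_h\colon W\times Y\to[0,M]$ is $l_h(w,y)=l(y,h(w))$, and $l_{\mathcal K}=\{l_k:k\in\mathcal K\}$; so $l_{\mathcal H}$ consists of functions on $X_0\times Y$ and $l_{\mathcal H_q}$ of functions on $X_{q-1}\times Y$. For a class $\mathcal K$ of functions from a set $W$ into $[0,M]$: $\sigma_{\mathcal K}$ the $\sigma$-algebra generated by inverse images of open balls, $\mathcal P_{\mathcal K}$ the probability measures on it, $d_P(k,k')=\int|k-k'|dP$, $\mathcal N(\varepsilon,S,\rho)$ minimal size of an $\varepsilon$-cover, $\mathcal C(\varepsilon,\mathcal K)=\sup_{P\in\mathcal P_{\mathcal K}}\mathcal N(\varepsilon,\mathcal K,d_P)$ ($\infty$ if unbounded). For a structure $U\xrightarrow{\mathcal F}V\xrightarrow{\mathcal G}A$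 and $P\in\mathcal P_{l_{\mathcal G\circ\mathcal F}}$ (measures on $U\times Y$), $d_{[P,l_{\mathcal G}]}(f,f')=\sup_{g\in\mathcal G}\int|l_{g\circ f}-l_{g\circ f'}|\,dP$ and $\mathcal C_{l_{\mathcal G}}(\varepsilon,\mathcal F)=\sup_{P\in\mathcal P_{l_{\mathcal G\circ\mathcal F}}}\mathcal N(\varepsilon,\mathcal F,d_{[P,l_{\mathcal G}]})$; here applied with $U=X_{i-1}$, $V=X_i$, $\mathcal F=\mathcal H_i$, $\mathcal G=\mathcal G_i$. *)

theory Defs
  imports "HOL-Probability.Probability"
begin

text \<open>All sets X_0, ..., X_q are carried by one ambient type 'x (carrier sets X i);
  maps are total functions 'x => 'x required to send X (i-1) into X i.\<close>

fun comps :: "(nat \<Rightarrow> ('x \<Rightarrow> 'x) set) \<Rightarrow> nat \<Rightarrow> nat \<Rightarrow> ('x \<Rightarrow> 'x) set" where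
  "comps H i 0 = {id}"
| "comps H i (Suc j) = (if j < i then {id}
      else {h \<circ> g | h g. h \<in> H (Suc j) \<and> g \<in> comps H i j})"

definition lossf :: "('y \<Rightarrow> 'a \<Rightarrow> real) \<Rightarrow> ('w \<Rightarrow> 'a) \<Rightarrow> ('w \<times> 'y \<Rightarrow> real)" where
  "lossf l h = (\<lambda>(w, y). l y (h w))"

definition lossc :: "('y \<Rightarrow> 'a \<Rightarrow> real) \<Rightarrow> ('w \<Rightarrow> 'a) set \<Rightarrow> ('w \<times> 'y \<Rightarrow> real) set" where
  "lossc l K = lossf l ` K"

definition gen_sets :: "'u set \<Rightarrow> ('u \<Rightarrow> real) set \<Rightarrow> 'u set set" where
  "gen_sets \<Omega> K = {k -` ball c r \<inter> \<Omega> | k c r. k \<in> K}"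

definition probs :: "'u set \<Rightarrow> ('u \<Rightarrow> real) set \<Rightarrow> 'u measure set" where
  "probs \<Omega> K = {P. prob_space P \<and> space P = \<Omega> \<and> sets P = sigma_sets \<Omega> (gen_sets \<Omega> K)}"

definition L1dist :: "'u measure \<Rightarrow> ('u \<Rightarrow> real) \<Rightarrow> ('u \<Rightarrow> real) \<Rightarrow> ennreal" where
  "L1dist P k k' = ennreal (LINT z|P. \<bar>k z - k' z\<bar>)"

text \<open>Minimal size of an (internal) eps-cover; infinity if no finite cover exists.\<close>
definition covnum :: "real \<Rightarrow> 'b set \<Rightarrow> ('b \<Rightarrow> 'b \<Rightarrow> ennreal) \<Rightarrow> enat" where
  "covnum \<epsilon> S \<rho> = Inf {enat (card T) | T. finite T \<and> T \<subseteq> S \<and> (\<forall>s\<in>S. \<exists>t\<in>T. \<rho> s t \<le> ennreal \<epsilon>)}"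

definition Cnum :: "'u set \<Rightarrow> real \<Rightarrow> ('u \<Rightarrow> real) set \<Rightarrow> enat" where
  "Cnum \<Omega> \<epsilon> K = (SUP P\<in>probs \<Omega> K. covnum \<epsilon> K (L1dist P))"

definition dist_comp :: "('y \<Rightarrow> 'a \<Rightarrow> real) \<Rightarrow> ('v \<Rightarrow> 'a) set \<Rightarrow> ('u \<times> 'y) measure
    \<Rightarrow> ('u \<Rightarrow> 'v) \<Rightarrow> ('u \<Rightarrow> 'v) \<Rightarrow> ennreal" where
  "dist_comp l G P f f' = (SUP g\<in>G. L1dist P (lossf l (g \<circ> f)) (lossf l (g \<circ> f')))"

definition Cnum_comp :: "('u \<times> 'y) set \<Rightarrow> ('y \<Rightarrow> 'a \<Rightarrow> real) \<Rightarrow> ('v \<Rightarrow> 'a) set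
    \<Rightarrow> real \<Rightarrow> ('u \<Rightarrow> 'v) set \<Rightarrow> enat" where
  "Cnum_comp \<Omega> l G \<epsilon> F =
     (SUP P\<in>probs \<Omega> (lossc l {g \<circ> f | g f. g \<in> G \<and> f \<in> F}). covnum \<epsilon> F (dist_comp l G P))"

end

theory Submission
  imports Defs
begin

lemma comps_refl: "comps H s s = {id}"
  by (cases s) auto

lemma comps_step: "s < q \<Longrightarrow> comps H s q = {g \<circ> f | g f. g \<in> comps H (Suc s) q \<and> f \<in> H (Suc s)}"
proof (induction q)
  case 0 then show ?case by simp
next
  case (Suc j)
  show ?case
  proof (cases "j = s")
    case True
    then show ?thesis by (auto simp: comps_refl)
  next
    case False
    with Suc have js: "s < j" by simp
    have "comps H s (Suc j) = {h \<circ> g | h g. h \<in> H (Suc j) \<and> g \<in> comps H s j}"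
      using js by simp
    also have "\<dots> = {g \<circ> f | g f. g \<in> comps H (Suc s) (Suc j) \<and> f \<in> H (Suc s)}"
    proof safe
      fix h g assume "h \<in> H (Suc j)" "g \<in> comps H s j"
      have "g \<in> {g \<circ> f | g f. g \<in> comps H (Suc s) j \<and> f \<in> H (Suc s)}"
        using \<open>g \<in> comps H s j\<close> unfolding Suc.IH[OF js] .
      then obtain g' f where "g = g' \<circ> f" "g' \<in> comps H (Suc s) j" "f \<in> H (Suc s)"
        by blast
      then show "\<exists>g2 f2. h \<circ> g = g2 \<circ> f2 \<and> g2 \<in> comps H (Suc s) (Suc j) \<and> f2 \<in> H (Suc s)"
      proof -
        have "h \<circ> g' \<in> comps H (Suc s) (Suc j)" using js \<open>h \<in> H (Suc j)\<close> \<open>g' \<in> comps H (Suc s) j\<close> by auto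
        moreover have "h \<circ> g = (h \<circ> g') \<circ> f" using \<open>g = g' \<circ> f\<close> by (simp add: o_assoc)
        ultimately show ?thesis using \<open>f \<in> H (Suc s)\<close> by blast
      qed
    next
      fix g f assume "g \<in> comps H (Suc s) (Suc j)" "f \<in> H (Suc s)"
      then obtain h g' where "g = h \<circ> g'" "h \<in> H (Suc j)" "g' \<in> comps H (Suc s) j"
        using js by auto
      then show "\<exists>h2 g2. g \<circ> f = h2 \<circ> g2 \<and> h2 \<in> H (Suc j) \<and> g2 \<in> comps H s j"
      proof -
        have "g' \<circ> f \<in> {g \<circ> f | g f. g \<in> comps H (Suc s) j \<and> f \<in> H (Suc s)}"
          using \<open>g' \<in> comps H (Suc s) j\<close> \<open>f \<in> H (Suc s)\<close> by blast
        then have "g' \<circ> f \<in> comps H s j" unfolding Suc.IH[OF js] .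
        moreover have "g \<circ> f = h \<circ> (g' \<circ> f)" using \<open>g = h \<circ> g'\<close> by (simp add: o_assoc)
        ultimately show ?thesis using \<open>h \<in> H (Suc j)\<close> by blast
      qed
    qed
    finally show ?thesis .
  qed
qed

lemma comps_maps:
  assumes "\<forall>i\<in>{1..q}. \<forall>h\<in>H i. \<forall>x\<in>X (i - 1). h x \<in> X i"
  shows "s \<le> n \<Longrightarrow> n \<le> q \<Longrightarrow> g \<in> comps H s n \<Longrightarrow> x \<in> X s \<Longrightarrow> g x \<in> X n"
proof (induction n arbitrary: g)
  case 0 then show ?case by simp
next
  case (Suc j)
  show ?case
  proof (cases "j < s")
    case True then have "s = Suc j" using Suc by simp
    then show ?thesis using Suc by (simp add: comps_refl)
  next
    case False
    then obtain h g' where "g = h \<circ> g'" "h \<in> H (Suc j)" "g' \<in> comps H s j" using Suc.prems by auto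
    moreover have "g' x \<in> X j" using Suc False calculation by auto
    moreover have "Suc j \<in> {1..q}" using Suc.prems by auto
    ultimately show ?thesis using assms(1) by fastforce
  qed
qed

lemma covnum_le: "finite T \<Longrightarrow> T \<subseteq> S \<Longrightarrow> \<forall>s\<in>S. \<exists>t\<in>T. \<rho> s t \<le> ennreal \<epsilon> \<Longrightarrow> covnum \<epsilon> S \<rho> \<le> enat (card T)"
  unfolding covnum_def by (rule Inf_lower) blast

lemma covnum_empty: "covnum \<epsilon> {} \<rho> = 0"
proof -
  have "covnum \<epsilon> {} \<rho> \<le> enat 0" using covnum_le[of "{}" "{}" \<rho> \<epsilon>] by simp
  then show ?thesis by (simp add: enat_0)
qed

lemma covnum_obtain:
  assumes "covnum \<epsilon> S \<rho> \<noteq> \<infinity>"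
  shows "\<exists>T. finite T \<and> T \<subseteq> S \<and> (\<forall>s\<in>S. \<exists>t\<in>T. \<rho> s t \<le> ennreal \<epsilon>) \<and> covnum \<epsilon> S \<rho> = enat (card T)"
proof -
  let ?C = "{enat (card T) | T. finite T \<and> T \<subseteq> S \<and> (\<forall>s\<in>S. \<exists>t\<in>T. \<rho> s t \<le> ennreal \<epsilon>)}"
  have ne: "?C \<noteq> {}"
  proof
    assume "?C = {}"
    then have "covnum \<epsilon> S \<rho> = \<infinity>" unfolding covnum_def by (simp add: Inf_enat_def)
    with assms show False by simp
  qed
  have "Inf ?C = (LEAST x. x \<in> ?C)" unfolding Inf_enat_def by (rule if_not_P[OF ne])
  moreover have "(LEAST x. x \<in> ?C) \<in> ?C"
  proof -
    from ne obtain c where "c \<in> ?C" by blast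
    then show ?thesis by (rule LeastI)
  qed
  ultimately have "Inf ?C \<in> ?C" by simp
  then show ?thesis unfolding covnum_def by blast
qed

lemma covnum_ge1: "S \<noteq> {} \<Longrightarrow> 1 \<le> covnum \<epsilon> S \<rho>"
  unfolding covnum_def
proof (rule Inf_greatest, clarify)
  fix T assume "S \<noteq> {}" "finite T" "T \<subseteq> S" "\<forall>s\<in>S. \<exists>t\<in>T. \<rho> s t \<le> ennreal \<epsilon>"
  then have "T \<noteq> {}" by auto
  with \<open>finite T\<close> have "card T \<ge> 1" by (simp add: Suc_leI card_gt_0_iff)
  then show "1 \<le> enat (card T)" by (simp add: one_enat_def)
qed

lemma meas_gen:
  assumes "k \<in> K" "space P = \<Omega>" "sets P = sigma_sets \<Omega> (gen_sets \<Omega> K)"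
  shows "k \<in> borel_measurable P"
proof (subst borel_measurable_iff_greater, intro allI)
  fix a :: real
  have "{x \<in> space P. a < k x} = (\<Union>n::nat. k -` ball (a + real n + 1) (real n + 1) \<inter> \<Omega>)"
  proof safe
    fix x assume x: "x \<in> space P" "a < k x"
    obtain n :: nat where "k x - a \<le> real n" using real_arch_simple by blast
    then show "x \<in> (\<Union>n::nat. k -` ball (a + real n + 1) (real n + 1) \<inter> \<Omega>)"
      using x assms(2) by (auto simp: dist_real_def intro!: exI[of _ n])
  qed (auto simp: dist_real_def assms(2))
  also have "\<dots> \<in> sigma_sets \<Omega> (gen_sets \<Omega> K)"
    by (intro sigma_sets.Union sigma_sets.Basic) (auto simp: gen_sets_def intro: assms(1))
  finally show "{x \<in> space P. a < k x} \<in> sets P" using assms(3) by simp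
qed

lemma step_lemma:
  fixes X :: "nat \<Rightarrow> 'x set" and H :: "nat \<Rightarrow> ('x \<Rightarrow> 'x) set"
    and Y :: "'y set" and l :: "'y \<Rightarrow> 'x \<Rightarrow> real" and M :: real
  assumes maps: "\<forall>i\<in>{1..q}. \<forall>h\<in>H i. \<forall>x\<in>X (i - 1). h x \<in> X i"
    and lb: "\<forall>y\<in>Y. \<forall>a\<in>X q. 0 \<le> l y a \<and> l y a \<le> M"
    and sq: "s < q" and e1: "0 \<le> e1" and e2: "0 \<le> e2"
  shows "Cnum (X s \<times> Y) (e1 + e2) (lossc l (comps H s q))
    \<le> Cnum (X (Suc s) \<times> Y) e2 (lossc l (comps H (Suc s) q))
      * Cnum_comp (X s \<times> Y) l (comps H (Suc s) q) e1 (H (Suc s))"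
proof -
  define G where "G = comps H (Suc s) q"
  define \<Omega> where "\<Omega> = X s \<times> Y"
  define \<Omega>' where "\<Omega>' = X (Suc s) \<times> Y"
  define LK where "LK = lossc l (comps H s q)"
  define LG where "LG = lossc l G"
  define A where "A = Cnum \<Omega>' e2 LG"
  define B where "B = Cnum_comp \<Omega> l G e1 (H (Suc s))"
  have cK: "comps H s q = {g \<circ> f | g f. g \<in> G \<and> f \<in> H (Suc s)}"
    unfolding G_def by (rule comps_step[OF sq])
  have mapK: "g x \<in> X q" if "g \<in> comps H s q" "x \<in> X s" for g x
    using comps_maps[OF maps, of s q] sq that by auto
  have mapH: "f x \<in> X (Suc s)" if "f \<in> H (Suc s)" "x \<in> X s" for f x
  proof -
    have "Suc s \<in> {1..q}" using sq by auto
    with maps have "\<forall>h\<in>H (Suc s). \<forall>x\<in>X (Suc s - 1). h x \<in> X (Suc s)" by blast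
    then show ?thesis using that by simp
  qed
  have bnd: "\<bar>k z\<bar> \<le> M" if kL: "k \<in> LK" and zO: "z \<in> \<Omega>" for k z
  proof -
    obtain g where g: "g \<in> comps H s q" "k = lossf l g" using kL unfolding LK_def lossc_def by blast
    obtain x y where z: "z = (x, y)" "x \<in> X s" "y \<in> Y" using zO by (auto simp: \<Omega>_def)
    have "g x \<in> X q" using mapK g z by blast
    with lb z have "0 \<le> l y (g x) \<and> l y (g x) \<le> M" by blast
    then show ?thesis by (simp add: g z lossf_def)
  qed
  have "Cnum \<Omega> (e1 + e2) LK \<le> A * B"
    unfolding Cnum_def[of \<Omega>]
  proof (rule SUP_least)
    fix P assume P: "P \<in> probs \<Omega> LK"
    then have Pps: "prob_space P" and Psp: "space P = \<Omega>"
      and Psets: "sets P = sigma_sets \<Omega> (gen_sets \<Omega> LK)" by (auto simp: probs_def)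
    interpret prob_space P by fact
    have measK: "k \<in> borel_measurable P" if "k \<in> LK" for k
      using meas_gen[OF that Psp Psets] .
    have intK: "integrable P k" if "k \<in> LK" for k
    proof (rule integrable_const_bound[where B=M])
      show "AE x in P. norm (k x) \<le> M" using bnd[OF that] Psp by (intro AE_I2) auto
      show "k \<in> borel_measurable P" by (rule measK[OF that])
    qed
    define \<phi> where "\<phi> f = (\<lambda>(x::'x, y::'y). (f x, y))" for f :: "'x \<Rightarrow> 'x"
    define N where "N = sigma \<Omega>' (gen_sets \<Omega>' LG)"
    define Pf where "Pf f = distr P N (\<phi> f)" for f
    have genG_pow: "gen_sets \<Omega>' LG \<subseteq> Pow \<Omega>'" by (auto simp: gen_sets_def)
    have spN: "space N = \<Omega>'" unfolding N_def by (rule space_measure_of_conv)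
    have setsN: "sets N = sigma_sets \<Omega>' (gen_sets \<Omega>' LG)" unfolding N_def by (rule sets_measure_of[OF genG_pow])
    have compK: "k \<circ> \<phi> f \<in> LK" if f: "f \<in> H (Suc s)" and k: "k \<in> LG" for f k
    proof -
      obtain g where g: "g \<in> G" "k = lossf l g" using k by (auto simp: LG_def lossc_def)
      have "k \<circ> \<phi> f = lossf l (g \<circ> f)" by (auto simp: g \<phi>_def lossf_def fun_eq_iff)
      moreover have "g \<circ> f \<in> comps H s q" using cK f g by blast
      ultimately show ?thesis by (simp add: LK_def lossc_def)
    qed
    have measphi: "\<phi> f \<in> measurable P N" if f: "f \<in> H (Suc s)" for f
      unfolding N_def
    proof (rule measurable_measure_of[OF genG_pow])
      show "\<phi> f \<in> space P \<rightarrow> \<Omega>'" using mapH[OF f] by (auto simp: Psp \<Omega>_def \<Omega>'_def \<phi>_def)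
      fix y assume "y \<in> gen_sets \<Omega>' LG"
      then obtain k c r where k: "k \<in> LG" "y = k -` ball c r \<inter> \<Omega>'" by (auto simp: gen_sets_def)
      have "\<phi> f -` y \<inter> space P = (k \<circ> \<phi> f) -` ball c r \<inter> \<Omega>"
        using mapH[OF f] by (auto simp: k Psp \<Omega>_def \<Omega>'_def \<phi>_def)
      also have "\<dots> \<in> gen_sets \<Omega> LK" using compK[OF f k(1)] by (auto simp: gen_sets_def)
      finally show "\<phi> f -` y \<inter> space P \<in> sets P" by (simp add: Psets)
    qed
    have Pf_probs: "Pf f \<in> probs \<Omega>' LG" if f: "f \<in> H (Suc s)" for f
      unfolding probs_def Pf_def using prob_space_distr[OF measphi[OF f]] spN setsN by simp
    have intPf: "L1dist (Pf f) k t = ennreal (LINT z|P. \<bar>(k \<circ> \<phi> f) z - (t \<circ> \<phi> f) z\<bar>)"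
      if f: "f \<in> H (Suc s)" and k: "k \<in> LG" and t: "t \<in> LG" for f k t
    proof -
      have "(\<lambda>z. \<bar>k z - t z\<bar>) \<in> borel_measurable N"
        using meas_gen[OF k spN setsN] meas_gen[OF t spN setsN] by measurable
      then show ?thesis unfolding L1dist_def Pf_def by (simp add: integral_distr[OF measphi[OF f]])
    qed
    have tri: "(LINT z|P. \<bar>k1 z - k3 z\<bar>) \<le> (LINT z|P. \<bar>k1 z - k2 z\<bar>) + (LINT z|P. \<bar>k2 z - k3 z\<bar>)"
      if "k1 \<in> LK" "k2 \<in> LK" "k3 \<in> LK" for k1 k2 k3
    proof -
      have i1: "integrable P (\<lambda>z. \<bar>k1 z - k2 z\<bar>)" using intK that by auto
      have i2: "integrable P (\<lambda>z. \<bar>k2 z - k3 z\<bar>)" using intK that by auto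
      have i3: "integrable P (\<lambda>z. \<bar>k1 z - k3 z\<bar>)" using intK that by auto
      have "(LINT z|P. \<bar>k1 z - k3 z\<bar>) \<le> (LINT z|P. \<bar>k1 z - k2 z\<bar> + \<bar>k2 z - k3 z\<bar>)"
        by (rule Bochner_Integration.integral_mono) (use i1 i2 i3 in auto)
      also have "\<dots> = (LINT z|P. \<bar>k1 z - k2 z\<bar>) + (LINT z|P. \<bar>k2 z - k3 z\<bar>)"
        by (rule Bochner_Integration.integral_add[OF i1 i2])
      finally show ?thesis .
    qed
    show "covnum (e1 + e2) LK (L1dist P) \<le> A * B"
    proof (cases "LK = {}")
      case True then show ?thesis by (simp add: covnum_empty)
    next
      case False
      then obtain g0 f0 where g0: "g0 \<in> G" and f0: "f0 \<in> H (Suc s)"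
        using cK by (auto simp: LK_def lossc_def)
      have LGne: "LG \<noteq> {}" using g0 by (auto simp: LG_def lossc_def)
      have P_B: "P \<in> probs \<Omega> (lossc l {g \<circ> f | g f. g \<in> G \<and> f \<in> H (Suc s)})"
        using P cK by (simp add: LK_def)
      define c1 where "c1 = covnum e1 (H (Suc s)) (dist_comp l G P)"
      have c1B: "c1 \<le> B" unfolding B_def Cnum_comp_def c1_def by (rule SUP_upper[OF P_B])
      have c1ge: "1 \<le> c1" unfolding c1_def by (rule covnum_ge1) (use f0 in auto)
      have cfA: "covnum e2 LG (L1dist (Pf f)) \<le> A" if "f \<in> H (Suc s)" for f
        unfolding A_def Cnum_def by (rule SUP_upper) (rule Pf_probs[OF that])
      have Age: "1 \<le> A" using order_trans[OF covnum_ge1[OF LGne] cfA[OF f0]] .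
      have Bge: "1 \<le> B" using order_trans[OF c1ge c1B] .
      have A0: "A \<noteq> 0" using Age by (auto simp: one_enat_def zero_enat_def)
      have B0: "B \<noteq> 0" using Bge by (auto simp: one_enat_def zero_enat_def)
      show ?thesis
      proof (cases "c1 = \<infinity>")
        case True
        then have "B = \<infinity>" using c1B by simp
        then have "A * B = \<infinity>" using A0 by (simp add: imult_is_infinity)
        then show ?thesis by simp
      next
        case False
        obtain T1 where T1: "finite T1" "T1 \<subseteq> H (Suc s)"
          "\<forall>h\<in>H (Suc s). \<exists>f\<in>T1. dist_comp l G P h f \<le> ennreal e1" "c1 = enat (card T1)"
          using covnum_obtain[OF False[unfolded c1_def]] unfolding c1_def by blast
        show ?thesis
        proof (cases "\<exists>f\<in>T1. covnum e2 LG (L1dist (Pf f)) = \<infinity>")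
          case True
          then obtain f where "f \<in> T1" "covnum e2 LG (L1dist (Pf f)) = \<infinity>" by blast
          then have "A = \<infinity>" using cfA T1(2) by fastforce
          then have "A * B = \<infinity>" using B0 by (simp add: imult_is_infinity)
          then show ?thesis by simp
        next
          case False
          then have "\<forall>f\<in>T1. \<exists>Tf. finite Tf \<and> Tf \<subseteq> LG \<and> (\<forall>k\<in>LG. \<exists>t\<in>Tf. L1dist (Pf f) k t \<le> ennreal e2)
              \<and> covnum e2 LG (L1dist (Pf f)) = enat (card Tf)"
            using covnum_obtain by blast
          from bchoice[OF this] obtain Tf where Tf: "\<forall>f\<in>T1. finite (Tf f) \<and> Tf f \<subseteq> LG
              \<and> (\<forall>k\<in>LG. \<exists>t\<in>Tf f. L1dist (Pf f) k t \<le> ennreal e2)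
              \<and> covnum e2 LG (L1dist (Pf f)) = enat (card (Tf f))" by blast
          define T where "T = (\<Union>f\<in>T1. (\<lambda>k. k \<circ> \<phi> f) ` Tf f)"
          have finT: "finite T" using T1(1) Tf by (auto simp: T_def)
          have TLK: "T \<subseteq> LK"
          proof
            fix t assume "t \<in> T"
            then obtain f k where "f \<in> T1" "k \<in> Tf f" "t = k \<circ> \<phi> f" by (auto simp: T_def)
            then show "t \<in> LK" using compK T1(2) Tf by blast
          qed
          have cov: "\<forall>k\<in>LK. \<exists>t\<in>T. L1dist P k t \<le> ennreal (e1 + e2)"
          proof
            fix k assume kK: "k \<in> LK"
            then obtain g h where g: "g \<in> G" and h: "h \<in> H (Suc s)" and k: "k = lossf l (g \<circ> h)"
              using cK by (auto simp: LK_def lossc_def)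
            obtain f where f: "f \<in> T1" "dist_comp l G P h f \<le> ennreal e1" using T1(3) h by blast
            have fH: "f \<in> H (Suc s)" using f T1(2) by blast
            have lg: "lossf l g \<in> LG" using g by (simp add: LG_def lossc_def)
            obtain t where t: "t \<in> Tf f" "L1dist (Pf f) (lossf l g) t \<le> ennreal e2"
              using Tf f(1) lg by blast
            have tLG: "t \<in> LG" using Tf f(1) t(1) by blast
            define k2 where "k2 = lossf l g \<circ> \<phi> f"
            define k3 where "k3 = t \<circ> \<phi> f"
            have k2K: "k2 \<in> LK" unfolding k2_def by (rule compK[OF fH lg])
            have k3K: "k3 \<in> LK" unfolding k3_def by (rule compK[OF fH tLG])
            have k2eq: "k2 = lossf l (g \<circ> f)" by (auto simp: k2_def \<phi>_def lossf_def fun_eq_iff)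
            have "L1dist P k k2 \<le> dist_comp l G P h f"
              unfolding dist_comp_def k k2eq by (rule SUP_upper) (rule g)
            then have "ennreal (LINT z|P. \<bar>k z - k2 z\<bar>) \<le> ennreal e1"
              unfolding L1dist_def using f(2) by (rule order_trans)
            then have b: "(LINT z|P. \<bar>k z - k2 z\<bar>) \<le> e1" using e1 by (simp add: ennreal_le_iff)
            have c: "(LINT z|P. \<bar>k2 z - k3 z\<bar>) \<le> e2"
              using t(2) intPf[OF fH lg tLG] e2 by (simp add: k2_def k3_def ennreal_le_iff)
            have "(LINT z|P. \<bar>k z - k3 z\<bar>) \<le> e1 + e2" using tri[OF kK k2K k3K] b c by linarith
            then have "L1dist P k k3 \<le> ennreal (e1 + e2)" unfolding L1dist_def by (rule ennreal_leI)
            moreover have "k3 \<in> T" using f(1) t(1) by (auto simp: T_def k3_def)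
            ultimately show "\<exists>t\<in>T. L1dist P k t \<le> ennreal (e1 + e2)" by blast
          qed
          have "covnum (e1 + e2) LK (L1dist P) \<le> enat (card T)" by (rule covnum_le[OF finT TLK cov])
          also have "card T \<le> (\<Sum>f\<in>T1. card (Tf f))"
            unfolding T_def
            by (rule order_trans[OF card_UN_le[OF T1(1)]]) (intro sum_mono card_image_le, use Tf in auto)
          then have "enat (card T) \<le> enat (\<Sum>f\<in>T1. card (Tf f))" by simp
          also have "enat (\<Sum>f\<in>T1. card (Tf f)) = (\<Sum>f\<in>T1. enat (card (Tf f)))"
            by (simp add: of_nat_eq_enat[symmetric])
          also have "\<dots> \<le> (\<Sum>f\<in>T1. A)"
          proof (rule sum_mono)
            fix f assume "f \<in> T1"
            then show "enat (card (Tf f)) \<le> A" using Tf cfA T1(2) by force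
          qed
          also have "\<dots> = of_nat (card T1) * A" by simp
          also have "\<dots> = c1 * A" using T1(4) by (simp add: of_nat_eq_enat)
          also have "\<dots> \<le> B * A" by (rule mult_right_mono[OF c1B]) simp
          finally show ?thesis by (simp add: mult.commute)
        qed
      qed
    qed
  qed
  then show ?thesis by (simp add: A_def B_def \<Omega>_def \<Omega>'_def LK_def LG_def G_def)
qed

lemma main_gen:
  fixes X :: "nat \<Rightarrow> 'x set" and H :: "nat \<Rightarrow> ('x \<Rightarrow> 'x) set"
    and Y :: "'y set" and l :: "'y \<Rightarrow> 'x \<Rightarrow> real" and M :: real
    and q :: nat and eps :: "nat \<Rightarrow> real"
  assumes q1: "q \<ge> 1"
    and maps: "\<forall>i\<in>{1..q}. \<forall>h\<in>H i. \<forall>x\<in>X (i - 1). h x \<in> X i"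
    and lb: "\<forall>y\<in>Y. \<forall>a\<in>X q. 0 \<le> l y a \<and> l y a \<le> M"
    and ep: "\<forall>i\<in>{1..q}. eps i > 0"
    and sq: "s \<le> q - 1"
  shows "Cnum (X s \<times> Y) (\<Sum>i=Suc s..q. eps i) (lossc l (comps H s q))
    \<le> Cnum (X (q - 1) \<times> Y) (eps q) (lossc l (H q))
      * (\<Prod>i\<in>{Suc s..<q}. Cnum_comp (X (i - 1) \<times> Y) l (comps H i q) (eps i) (H i))"
  using sq
proof (induction s rule: inc_induct)
  case base
  have "comps H (q - 1) q = {g \<circ> f | g f. g \<in> comps H (Suc (q - 1)) q \<and> f \<in> H (Suc (q - 1))}"
    by (rule comps_step) (use q1 in auto)
  also have "\<dots> = H q" using q1 by (auto simp: comps_refl)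
  finally have c: "comps H (q - 1) q = H q" .
  have "Suc (q - 1) = q" using q1 by simp
  then show ?case using c by simp
next
  case (step n)
  have nq: "n < q" using step.hyps q1 by simp
  have "Suc n \<in> {1..q}" using nq by simp
  then have e1: "0 \<le> eps (Suc n)" using ep by (meson less_imp_le)
  have e2: "0 \<le> (\<Sum>i=Suc (Suc n)..q. eps i)" proof (intro sum_nonneg)
    fix x assume "x \<in> {Suc (Suc n)..q}"
    then have "x \<in> {1..q}" by simp
    then show "0 \<le> eps x" using ep by (meson less_imp_le)
  qed
  have sumeq: "(\<Sum>i=Suc n..q. eps i) = eps (Suc n) + (\<Sum>i=Suc (Suc n)..q. eps i)"
    using nq by (intro sum.atLeast_Suc_atMost) simp
  have prodeq: "(\<Prod>i\<in>{Suc n..<q}. Cnum_comp (X (i - 1) \<times> Y) l (comps H i q) (eps i) (H i))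
     = Cnum_comp (X (Suc n - 1) \<times> Y) l (comps H (Suc n) q) (eps (Suc n)) (H (Suc n))
       * (\<Prod>i\<in>{Suc (Suc n)..<q}. Cnum_comp (X (i - 1) \<times> Y) l (comps H i q) (eps i) (H i))"
    using step.hyps by (intro prod.atLeast_Suc_lessThan) simp
  define C where "C = Cnum (X (q - 1) \<times> Y) (eps q) (lossc l (H q))"
  define Bn where "Bn = Cnum_comp (X n \<times> Y) l (comps H (Suc n) q) (eps (Suc n)) (H (Suc n))"
  define Pr where "Pr = (\<Prod>i\<in>{Suc (Suc n)..<q}. Cnum_comp (X (i - 1) \<times> Y) l (comps H i q) (eps i) (H i))"
  have "Cnum (X n \<times> Y) (\<Sum>i=Suc n..q. eps i) (lossc l (comps H n q))
    \<le> Cnum (X (Suc n) \<times> Y) (\<Sum>i=Suc (Suc n)..q. eps i) (lossc l (comps H (Suc n) q)) * Bn"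
    unfolding sumeq Bn_def by (rule step_lemma[OF maps lb nq e1 e2])
  also have "\<dots> \<le> (C * Pr) * Bn"
    by (rule mult_right_mono) (use step.IH in \<open>simp_all add: C_def Pr_def\<close>)
  also have "\<dots> = C * (Bn * Pr)" by (simp only: ac_simps)
  finally show ?case unfolding prodeq by (simp add: C_def Bn_def Pr_def)
qed

theorem lemmaC12:
  fixes X :: "nat \<Rightarrow> 'x set" and H :: "nat \<Rightarrow> ('x \<Rightarrow> 'x) set"
    and Y :: "'y set" and l :: "'y \<Rightarrow> 'x \<Rightarrow> real" and M :: real
    and q :: nat and eps :: "nat \<Rightarrow> real"
  assumes "q \<ge> 1"
    and "\<forall>i\<in>{1..q}. \<forall>h\<in>H i. \<forall>x\<in>X (i - 1). h x \<in> X i"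
    and "\<forall>y\<in>Y. \<forall>a\<in>X q. 0 \<le> l y a \<and> l y a \<le> M"
    and "\<forall>i\<in>{1..q}. eps i > 0"
  shows "Cnum (X 0 \<times> Y) (\<Sum>i=1..q. eps i) (lossc l (comps H 0 q))
    \<le> Cnum (X (q - 1) \<times> Y) (eps q) (lossc l (H q))
      * (\<Prod>i\<in>{1..<q}. Cnum_comp (X (i - 1) \<times> Y) l (comps H i q) (eps i) (H i))"
  using main_gen[OF assms, of 0] by simp

end
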